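(* Fix $R\in(0,1)$ and, when $\Delta_S^B\ne0$, let $\tilde i=\Delta_O^B/\Delta_S^B$. Let $\mathbb E[\cdot]$ denote expectation with respect to $i\sim F$. The value $V(R)$ of the recommendation system equals: (i) $\pi^B\big[\Delta_O^B-\Delta_S^B\,\mathbb E[i]\big]$ if $|\Delta_S^B|\le 2\Delta_O^B$; (ii) $(1-\pi^B)F(\tilde i)\big[\Delta_O^D-\Delta_S^D\,\mathbb E[i\mid i\le\tilde i]\big]+\pi^B(1-F(\tilde i))\big[\Delta_O^B-\Delta_S^B\,\mathbb E[i\mid i\ge\tilde i]\big]$ if $\Delta_S^B<-2\Delta_O^B$; (iii) $\pi^BF(\tilde i)\big[\Delta_O^B-\Delta_S^B\,\mathbb E[i\mid i\le\tilde i]\big]+(1-\pi^B)(1-F(\tilde i))\big[\Delta_O^D-\Delta_S^D\,\mathbb E[i\mid i\ge\tilde i]\big]$ if $\Delta_S^B>2\Delta_O^B$.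
   Context: Setting. Consumer types are $i\in[-1/2,1/2]$, distributed according to a continuous cumulative distribution function $F$ with full support on $[-1/2,1/2]$. A product has a quality vector $(Q_1,Q_2)\in\{0,1\}^2$; a type-$i$ consumer gets payoff $(1/2+i)Q_1+(1/2-i)Q_2$ from it. The versions $(1,1),(1,0),(0,1),(0,0)$ have prior probabilities $q_H,q_1,q_2,q_L$ respectively, all strictly positive and summing to $1$. One product carries a recommendation from a sender whose type is drawn from $F$ independently of the product; given a threshold $R\in(0,1)$, the sender gives a buy recommendation $B$ if her payoff from the product is at least $R$ and a don't-buy recommendation $D$ otherwise. Let $\phi_1(R)=1-F(R-1/2)$, $\phi_2(R)=F(1/2-R)$, $\pi^B=q_H+q_1\phi_1(R)+q_2\phi_2(R)$ and $\pi^D=1-\pi^B$. Posteriors: $p^B_H=q_H/\pi^B$, $p^B_1=q_1\phi_1(R)/\pi^B$, $p^B_2=q_2\phi_2(R)/\pi^B$, $p^B_L=0$; $p^D_H=0$, $p^D_1=q_1(1-\phi_1(R))/\pi^D$, $p^D_2=q_2(1-\phi_2(R))/\pi^D$, $p^D_L=q_L/\pi^D$. For $r\in\{B,D\}$ let $U_i^r=p_H^r+(1/2+i)p_1^r+(1/2-i)p_2^r$ and $U_i^0=q_H+(1/2+i)q_1+(1/2-i)q_2$. The objective and subjective effects of $r\in\{B,D\}$ are $\Delta_O^r=p_H^r-q_H+\frac{p_1^r-q_1}{2}+\frac{p_2^r-q_2}{2}$ and $\Delta_S^r=(p_2^r-q_2)-(p_1^r-q_1)$. The value of the recommendation system is the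 expected payoff gain of a receiver drawn from $F$ (independently of the sender) who, after observing the recommendation, optimally chooses between the recommended product and an unrecommended alternative: $V(R)=\pi^B\int_{-1/2}^{1/2}\max\{U_i^B-U_i^0,0\}\,dF(i)+\pi^D\int_{-1/2}^{1/2}\max\{U_i^D-U_i^0,0\}\,dF(i)$. *)

theory Defs
  imports "HOL-Probability.Probability"
begin

text \<open>Consumer types i are distributed according to the probability measure M on the reals,
  with cumulative distribution function F = cdf M.  Priors qH q1 q2 qL of versions
  (1,1),(1,0),(0,1),(0,0); recommendation threshold R.\<close>

datatype recm = Buy | DontBuy

definition phi1 :: "(real \<Rightarrow> real) \<Rightarrow> real \<Rightarrow> real" where
  "phi1 F R = 1 - F (R - 1/2)"

definition phi2 :: "(real \<Rightarrow> real) \<Rightarrow> real \<Rightarrow> real" where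
  "phi2 F R = F (1/2 - R)"

definition piB :: "(real \<Rightarrow> real) \<Rightarrow> real \<Rightarrow> real \<Rightarrow> real \<Rightarrow> real \<Rightarrow> real" where
  "piB F qH q1 q2 R = qH + q1 * phi1 F R + q2 * phi2 F R"

definition piD :: "(real \<Rightarrow> real) \<Rightarrow> real \<Rightarrow> real \<Rightarrow> real \<Rightarrow> real \<Rightarrow> real" where
  "piD F qH q1 q2 R = 1 - piB F qH q1 q2 R"

definition postH :: "(real \<Rightarrow> real) \<Rightarrow> real \<Rightarrow> real \<Rightarrow> real \<Rightarrow> real \<Rightarrow> real \<Rightarrow> recm \<Rightarrow> real" where
  "postH F qH q1 q2 qL R r =
     (case r of Buy \<Rightarrow> qH / piB F qH q1 q2 R | DontBuy \<Rightarrow> 0)"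

definition post1 :: "(real \<Rightarrow> real) \<Rightarrow> real \<Rightarrow> real \<Rightarrow> real \<Rightarrow> real \<Rightarrow> real \<Rightarrow> recm \<Rightarrow> real" where
  "post1 F qH q1 q2 qL R r =
     (case r of Buy \<Rightarrow> q1 * phi1 F R / piB F qH q1 q2 R
      | DontBuy \<Rightarrow> q1 * (1 - phi1 F R) / piD F qH q1 q2 R)"

definition post2 :: "(real \<Rightarrow> real) \<Rightarrow> real \<Rightarrow> real \<Rightarrow> real \<Rightarrow> real \<Rightarrow> real \<Rightarrow> recm \<Rightarrow> real" where
  "post2 F qH q1 q2 qL R r =
     (case r of Buy \<Rightarrow> q2 * phi2 F R / piB F qH q1 q2 R
      | DontBuy \<Rightarrow> q2 * (1 - phi2 F R) / piD F qH q1 q2 R)"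

definition postL :: "(real \<Rightarrow> real) \<Rightarrow> real \<Rightarrow> real \<Rightarrow> real \<Rightarrow> real \<Rightarrow> real \<Rightarrow> recm \<Rightarrow> real" where
  "postL F qH q1 q2 qL R r =
     (case r of Buy \<Rightarrow> 0 | DontBuy \<Rightarrow> qL / piD F qH q1 q2 R)"

definition Urec :: "(real \<Rightarrow> real) \<Rightarrow> real \<Rightarrow> real \<Rightarrow> real \<Rightarrow> real \<Rightarrow> real \<Rightarrow> recm \<Rightarrow> real \<Rightarrow> real" where
  "Urec F qH q1 q2 qL R r i =
     postH F qH q1 q2 qL R r + (1/2 + i) * post1 F qH q1 q2 qL R r
       + (1/2 - i) * post2 F qH q1 q2 qL R r"

definition U0 :: "real \<Rightarrow> real \<Rightarrow> real \<Rightarrow> real \<Rightarrow> real" where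
  "U0 qH q1 q2 i = qH + (1/2 + i) * q1 + (1/2 - i) * q2"

definition DeltaO :: "(real \<Rightarrow> real) \<Rightarrow> real \<Rightarrow> real \<Rightarrow> real \<Rightarrow> real \<Rightarrow> real \<Rightarrow> recm \<Rightarrow> real" where
  "DeltaO F qH q1 q2 qL R r =
     postH F qH q1 q2 qL R r - qH + (post1 F qH q1 q2 qL R r - q1) / 2
       + (post2 F qH q1 q2 qL R r - q2) / 2"

definition DeltaS :: "(real \<Rightarrow> real) \<Rightarrow> real \<Rightarrow> real \<Rightarrow> real \<Rightarrow> real \<Rightarrow> real \<Rightarrow> recm \<Rightarrow> real" where
  "DeltaS F qH q1 q2 qL R r =
     (post2 F qH q1 q2 qL R r - q2) - (post1 F qH q1 q2 qL R r - q1)"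

definition Vrec :: "real measure \<Rightarrow> real \<Rightarrow> real \<Rightarrow> real \<Rightarrow> real \<Rightarrow> real \<Rightarrow> real" where
  "Vrec M qH q1 q2 qL R =
     piB (cdf M) qH q1 q2 R *
       (\<integral>i. max (Urec (cdf M) qH q1 q2 qL R Buy i - U0 qH q1 q2 i) 0 \<partial>M)
   + piD (cdf M) qH q1 q2 R *
       (\<integral>i. max (Urec (cdf M) qH q1 q2 qL R DontBuy i - U0 qH q1 q2 i) 0 \<partial>M)"

definition Ei :: "real measure \<Rightarrow> real" where
  "Ei M = (\<integral>i. i \<partial>M)"

definition Ei_le :: "real measure \<Rightarrow> real \<Rightarrow> real" where
  "Ei_le M t = (\<integral>i\<in>{..t}. i \<partial>M) / measure M {..t}"

definition Ei_ge :: "real measure \<Rightarrow> real \<Rightarrow> real" where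
  "Ei_ge M t = (\<integral>i\<in>{t..}. i \<partial>M) / measure M {t..}"

end

theory Submission
  imports Defs
begin

lemma gap: "Urec F qH q1 q2 qL R r i - U0 qH q1 q2 i
   = DeltaO F qH q1 q2 qL R r - i * DeltaS F qH q1 q2 qL R r"
  unfolding Urec_def U0_def DeltaO_def DeltaS_def by (simp add: field_simps)

lemma split_int:
  assumes "real_distribution M" and intI: "integrable M (\<lambda>i::real. i)"
    and A: "A \<in> sets borel"
  shows "(\<integral>i. indicator A i * (c - i * d) \<partial>M) = c * measure M A - d * (\<integral>i\<in>A. i \<partial>M)"
proof -
  interpret real_distribution M by fact
  have AM: "A \<in> sets M" using A by simp
  have i1: "integrable M (\<lambda>i. indicator A i * c)"
    using AM by (intro integrable_mult_left integrable_real_indicator) (auto simp: less_top[symmetric])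
  have i2: "integrable M (\<lambda>i. indicator A i * i * d)"
  proof -
    have "integrable M (\<lambda>x. indicator A x * x)"
      using integrable_mult_indicator[OF AM intI] by simp
    thus ?thesis by (intro integrable_mult_left)
  qed
  have "(\<integral>i. indicator A i * (c - i * d) \<partial>M) = (\<integral>i. indicator A i * c - indicator A i * i * d \<partial>M)"
    by (simp add: algebra_simps)
  also have "\<dots> = (\<integral>i. indicator A i * c \<partial>M) - (\<integral>i. indicator A i * i * d \<partial>M)"
    using i1 i2 by (rule Bochner_Integration.integral_diff)
  also have "(\<integral>i. indicator A i * c \<partial>M) = c * measure M A"
    by simp
  also have "(\<integral>i. indicator A i * i * d \<partial>M) = d * (\<integral>i\<in>A. i \<partial>M)"
    unfolding set_lebesgue_integral_def by simp
  finally show ?thesis .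
qed

lemma DOB_nonneg_aux:
  fixes qH q1 q2 qL a b :: real
  assumes "qH > 0" "q1 > 0" "q2 > 0" "qL > 0" "qH + q1 + q2 + qL = 1"
    "0 \<le> a" "a \<le> 1" "0 \<le> b" "b \<le> 1"
  shows "qH + (q1*a + q2*b)/2 - (qH + q1*a + q2*b) * (qH + (q1+q2)/2) \<ge> 0"
proof -
  define s where "s = q1*a + q2*b"
  define t where "t = (q1+q2)/2"
  have s0: "0 \<le> s" using assms unfolding s_def by simp
  have "q1*a \<le> q1" "q2*b \<le> q2" using assms by (auto intro: mult_left_le)
  hence s1: "s \<le> 2*t" unfolding s_def t_def by simp
  have t2: "2*t = q1+q2" unfolding t_def by simp
  have qL: "qL = 1 - qH - 2*t" using assms(5) t2 by linarith
  have t0: "t > 0" using assms unfolding t_def by simp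
  have "2*t*(qH + s/2 - (qH+s)*(qH+t)) = (2*t-s)*qH*(qL+t) + s*(qH+t)*qL"
    unfolding qL by (simp add: algebra_simps)
  also have "\<dots> \<ge> 0" using s0 s1 assms t0 by (intro add_nonneg_nonneg mult_nonneg_nonneg) auto
  finally have "2*t*(qH + s/2 - (qH+s)*(qH+t)) \<ge> 0" .
  hence "qH + s/2 - (qH+s)*(qH+t) \<ge> 0" using t0 by (simp add: zero_le_mult_iff)
  thus ?thesis unfolding s_def t_def by (simp add: add.assoc)
qed

theorem proposition3:
  fixes M :: "real measure" and qH q1 q2 qL R :: real
  assumes distr: "real_distribution M"
    and F_cont: "continuous_on UNIV (cdf M)"
    and F_lo: "cdf M (-1/2) = 0"
    and F_hi: "cdf M (1/2) = 1"
    and F_full: "\<And>x y. -1/2 \<le> x \<Longrightarrow> x < y \<Longrightarrow> y \<le> 1/2 \<Longrightarrow> cdf M x < cdf M y"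
    and q_pos: "qH > 0" "q1 > 0" "q2 > 0" "qL > 0"
    and q_sum: "qH + q1 + q2 + qL = 1"
    and R: "0 < R" "R < 1"
  defines "F \<equiv> cdf M"
    and "pB \<equiv> piB (cdf M) qH q1 q2 R"
    and "DOB \<equiv> DeltaO (cdf M) qH q1 q2 qL R Buy"
    and "DSB \<equiv> DeltaS (cdf M) qH q1 q2 qL R Buy"
    and "DOD \<equiv> DeltaO (cdf M) qH q1 q2 qL R DontBuy"
    and "DSD \<equiv> DeltaS (cdf M) qH q1 q2 qL R DontBuy"
    and "it \<equiv> DeltaO (cdf M) qH q1 q2 qL R Buy / DeltaS (cdf M) qH q1 q2 qL R Buy"
  shows "(\<bar>DSB\<bar> \<le> 2 * DOB \<longrightarrow> Vrec M qH q1 q2 qL R = pB * (DOB - DSB * Ei M))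
       \<and> (DSB < - 2 * DOB \<longrightarrow> Vrec M qH q1 q2 qL R =
            (1 - pB) * F it * (DOD - DSD * Ei_le M it)
            + pB * (1 - F it) * (DOB - DSB * Ei_ge M it))
       \<and> (DSB > 2 * DOB \<longrightarrow> Vrec M qH q1 q2 qL R =
            pB * F it * (DOB - DSB * Ei_le M it)
            + (1 - pB) * (1 - F it) * (DOD - DSD * Ei_ge M it))"
proof -
  interpret real_distribution M by (rule distr)
  define a where "a = phi1 (cdf M) R"
  define b where "b = phi2 (cdf M) R"
  have a01: "0 \<le> a" "a \<le> 1" unfolding a_def phi1_def
    using cdf_nonneg[of "R-1/2"] cdf_bounded_prob[of "R-1/2"] by auto
  have b01: "0 \<le> b" "b \<le> 1" unfolding b_def phi2_def
    using cdf_nonneg[of "1/2-R"] cdf_bounded_prob[of "1/2-R"] by auto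
  have pBe: "pB = qH + q1*a + q2*b" unfolding pB_def piB_def a_def b_def by simp
  have qa: "q1*a \<le> q1" "q2*b \<le> q2" using a01 b01 q_pos by (auto intro: mult_left_le)
  have pB0: "pB > 0" unfolding pBe using a01 b01 q_pos by (simp add: add_pos_nonneg)
  have pB1: "pB < 1" unfolding pBe using qa q_pos q_sum by linarith
  have DOBe: "DOB = qH/pB - qH + (q1*a/pB - q1)/2 + (q2*b/pB - q2)/2"
    unfolding DOB_def DeltaO_def postH_def post1_def post2_def a_def b_def pB_def by simp
  have DSBe: "DSB = (q2*b/pB - q2) - (q1*a/pB - q1)"
    unfolding DSB_def DeltaS_def post1_def post2_def a_def b_def pB_def by simp
  define pD where "pD = 1 - pB"
  have pD0: "pD > 0" unfolding pD_def using pB1 by simp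
  have DODe: "DOD = 0 - qH + (q1*(1-a)/pD - q1)/2 + (q2*(1-b)/pD - q2)/2"
    unfolding DOD_def DeltaO_def postH_def post1_def post2_def a_def b_def pB_def piD_def pD_def by simp
  have DSDe: "DSD = (q2*(1-b)/pD - q2) - (q1*(1-a)/pD - q1)"
    unfolding DSD_def DeltaS_def post1_def post2_def a_def b_def pB_def piD_def pD_def by simp
  have pDOB: "pB*DOB = qH + (q1*a + q2*b)/2 - pB*(qH + (q1+q2)/2)"
    unfolding DOBe using pB0 by (simp add: field_simps)
  have pDOD': "pD*DOD = (q1*(1-a) + q2*(1-b))/2 - pD*(qH + (q1+q2)/2)"
    unfolding DODe using pD0 by (simp add: field_simps)
  have pDSB: "pB*DSB = q2*b - q1*a - pB*(q2-q1)"
    unfolding DSBe using pB0 by (simp add: field_simps)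
  have pDSD': "pD*DSD = q2*(1-b) - q1*(1-a) - pD*(q2-q1)"
    unfolding DSDe using pD0 by (simp add: field_simps)
  have pDOD: "(1-pB)*DOD = (q1*(1-a) + q2*(1-b))/2 - (1-pB)*(qH + (q1+q2)/2)"
    using pDOD' unfolding pD_def .
  have pDSD: "(1-pB)*DSD = q2*(1-b) - q1*(1-a) - (1-pB)*(q2-q1)"
    using pDSD' unfolding pD_def .
  have balO: "pB*DOB + (1-pB)*DOD = 0"
  proof -
    have "pB*DOB + (1-pB)*DOD = qH + (q1*a + q2*b)/2 - pB*(qH + (q1+q2)/2)
      + ((q1*(1-a) + q2*(1-b))/2 - (1-pB)*(qH + (q1+q2)/2))" using pDOB pDOD by simp
    also have "\<dots> = 0" unfolding pBe by (simp add: field_simps)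
    finally show ?thesis .
  qed
  have balS: "pB*DSB + (1-pB)*DSD = 0"
  proof -
    have "pB*DSB + (1-pB)*DSD = q2*b - q1*a - pB*(q2-q1)
      + (q2*(1-b) - q1*(1-a) - (1-pB)*(q2-q1))" using pDSB pDSD by simp
    also have "\<dots> = 0" unfolding pBe by (simp add: field_simps)
    finally show ?thesis .
  qed
  have DOB0: "DOB \<ge> 0"
  proof -
    have aux: "qH + (q1*a+q2*b)/2 - pB*(qH+(q1+q2)/2) \<ge> 0"
      using DOB_nonneg_aux[OF q_pos q_sum a01 b01] unfolding pBe by (simp add: add.assoc)
    have "pB*DOB \<ge> 0" using aux pDOB by linarith
    thus ?thesis using pB0 by (simp add: zero_le_mult_iff)
  qed
  define k where "k = pB/(1-pB)"
  have k0: "k > 0" unfolding k_def using pB0 pB1 by simp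
  have gD: "DOD - i*DSD = -k*(DOB - i*DSB)" for i
  proof -
    have "DOD = -k*DOB" "DSD = -k*DSB" unfolding k_def using balO balS pB1
      by (simp_all add: field_simps)
    thus ?thesis by (simp add: algebra_simps)
  qed
  have V: "Vrec M qH q1 q2 qL R = pB * (\<integral>i. max (DOB - i*DSB) 0 \<partial>M)
      + (1-pB) * (\<integral>i. max (DOD - i*DSD) 0 \<partial>M)"
    unfolding Vrec_def gap piD_def pB_def[symmetric] DOB_def[symmetric] DSB_def[symmetric]
      DOD_def[symmetric] DSD_def[symmetric] by simp
  have null1: "{..-1/2} \<in> null_sets M"
  proof -
    have "emeasure M {..-1/2} = 0" using F_lo by (simp add: emeasure_eq_measure cdf_def2)
    thus ?thesis by (intro null_setsI) auto
  qed
  have null2: "{1/2<..} \<in> null_sets M"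
  proof -
    have "measure M {1/2<..} = 1 - measure M {..1/2}"
      using prob_compl[of "{..1/2}"] by (simp add: Compl_eq_Diff_UNIV[symmetric] not_le)
    hence "emeasure M {1/2<..} = 0" using F_hi by (simp add: emeasure_eq_measure cdf_def2)
    thus ?thesis by (intro null_setsI) auto
  qed
  have AEs: "AE i in M. -1/2 < i \<and> i \<le> 1/2"
    by (rule AE_I'[OF null_sets.Un[OF null1 null2]]) auto
  have intI: "integrable M (\<lambda>i::real. i)"
    by (rule integrable_const_bound[where B="1/2"]) (use AEs in eventually_elim, auto)
  have measF: "measure M {..t} = F t" for t unfolding F_def cdf_def2 ..
  have measG: "measure M {t..} = 1 - F t" for t
  proof -
    have "isCont (cdf M) t" using F_cont by (simp add: continuous_on_eq_continuous_at)
    hence z: "measure M {t} = 0" by (simp add: isCont_cdf)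
    have "measure M {..t} = measure M ({..<t} \<union> {t})" by (rule arg_cong[where f="measure M"]) auto
    also have "\<dots> = measure M {..<t} + measure M {t}" by (rule finite_measure_Union) auto
    finally have 1: "measure M {..<t} = F t" using z measF[of t] by simp
    have "measure M {t..} = 1 - measure M {..<t}"
      using prob_compl[of "{..<t}"] by (simp add: Compl_eq_Diff_UNIV[symmetric] not_less)
    thus ?thesis using 1 by simp
  qed
  show ?thesis
  proof (intro conjI impI)
    assume h: "\<bar>DSB\<bar> \<le> 2 * DOB"
    have pos: "AE i in M. DOB - i*DSB \<ge> 0"
      using AEs
    proof eventually_elim
      case (elim i)
      hence "\<bar>i\<bar> \<le> 1/2" by auto
      hence "\<bar>i\<bar>*\<bar>DSB\<bar> \<le> 1/2*\<bar>DSB\<bar>" by (rule mult_right_mono) simp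
      moreover have "i*DSB \<le> \<bar>i\<bar>*\<bar>DSB\<bar>" by (simp add: abs_mult[symmetric])
      ultimately show ?case using h by linarith
    qed
    have e1: "(\<integral>i. max (DOB - i*DSB) 0 \<partial>M) = (\<integral>i. DOB - i*DSB \<partial>M)"
      by (rule integral_cong_AE) (use pos in auto)
    have e2: "(\<integral>i. max (DOD - i*DSD) 0 \<partial>M) = (\<integral>i. 0 \<partial>M)"
    proof (rule integral_cong_AE)
      show "AE x in M. max (DOD - x * DSD) 0 = 0" using pos
      proof eventually_elim
        case (elim i)
        thus ?case unfolding gD using k0 by (simp add: mult_nonneg_nonneg)
      qed
    qed auto
    have e3: "(\<integral>i. DOB - i*DSB \<partial>M) = DOB - DSB * Ei M"
      unfolding Ei_def using intI prob_space by (simp add: mult.commute)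
    show "Vrec M qH q1 q2 qL R = pB * (DOB - DSB * Ei M)"
      unfolding V e1 e2 e3 by simp
  next
    assume h: "DSB < - 2 * DOB"
    have neg: "DSB < 0" using h DOB0 by linarith
    have itv: "it = DOB/DSB" unfolding it_def DOB_def DSB_def ..
    have itD: "it*DSB = DOB" unfolding itv using neg by simp
    have it1: "it > -1/2" unfolding itv using h neg by (simp add: field_simps)
    have it2: "it \<le> 0" unfolding itv using neg DOB0 by (simp add: divide_nonneg_neg)
    have F0: "F it > 0" using F_full[of "-1/2" it] it1 it2 F_lo unfolding F_def by simp
    have F1: "F it < 1" using F_full[of it "1/2"] it1 it2 F_hi unfolding F_def by simp
    have pw1: "max (DOB - i*DSB) 0 = indicator {it..} i * (DOB - i*DSB)" for i
    proof (cases "it \<le> i")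
      case True
      hence "i*DSB \<le> it*DSB" using neg by (simp add: mult_right_mono_neg)
      thus ?thesis using True itD by simp
    next
      case False
      hence "i*DSB > it*DSB" using neg by (simp add: mult_strict_right_mono_neg)
      thus ?thesis using False itD by simp
    qed
    have pw2: "max (DOD - i*DSD) 0 = indicator {..it} i * (DOD - i*DSD)" for i
    proof (cases "i \<le> it")
      case True
      hence "i*DSB \<ge> it*DSB" using neg by (simp add: mult_right_mono_neg)
      hence "DOB - i*DSB \<le> 0" using itD by simp
      hence "DOD - i*DSD \<ge> 0" unfolding gD using k0 by (simp add: mult_le_0_iff)
      thus ?thesis using True by simp
    next
      case False
      hence "i*DSB < it*DSB" using neg by (simp add: mult_strict_right_mono_neg)
      hence "DOB - i*DSB > 0" using itD by simp
      hence "DOD - i*DSD < 0" unfolding gD using k0 by (simp add: mult_pos_pos)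
      thus ?thesis using False by simp
    qed
    have V2: "Vrec M qH q1 q2 qL R = pB * (DOB * (1 - F it) - DSB * (\<integral>i\<in>{it..}. i \<partial>M))
       + (1-pB) * (DOD * F it - DSD * (\<integral>i\<in>{..it}. i \<partial>M))"
      unfolding V pw1 pw2 by (simp add: split_int[OF distr intI] measF measG)
    show "Vrec M qH q1 q2 qL R = (1 - pB) * F it * (DOD - DSD * Ei_le M it)
            + pB * (1 - F it) * (DOB - DSB * Ei_ge M it)"
      unfolding V2 Ei_le_def Ei_ge_def measF measG using F0 F1 by (simp add: field_simps)
  next
    assume h: "DSB > 2 * DOB"
    have pos: "DSB > 0" using h DOB0 by linarith
    have itv: "it = DOB/DSB" unfolding it_def DOB_def DSB_def ..
    have itD: "it*DSB = DOB" unfolding itv using pos by simp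
    have it1: "it < 1/2" unfolding itv using h pos by (simp add: field_simps)
    have it2: "it \<ge> 0" unfolding itv using pos DOB0 by simp
    have F0: "F it > 0" using F_full[of "-1/2" it] it1 it2 F_lo unfolding F_def by simp
    have F1: "F it < 1" using F_full[of it "1/2"] it1 it2 F_hi unfolding F_def by simp
    have pw1: "max (DOB - i*DSB) 0 = indicator {..it} i * (DOB - i*DSB)" for i
    proof (cases "i \<le> it")
      case True
      hence "i*DSB \<le> it*DSB" using pos by (simp add: mult_right_mono)
      thus ?thesis using True itD by simp
    next
      case False
      hence "i*DSB > it*DSB" using pos by (simp add: mult_strict_right_mono)
      thus ?thesis using False itD by simp
    qed
    have pw2: "max (DOD - i*DSD) 0 = indicator {it..} i * (DOD - i*DSD)" for i
    proof (cases "it \<le> i")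
      case True
      hence "i*DSB \<ge> it*DSB" using pos by (simp add: mult_right_mono)
      hence "DOB - i*DSB \<le> 0" using itD by simp
      hence "DOD - i*DSD \<ge> 0" unfolding gD using k0 by (simp add: mult_le_0_iff)
      thus ?thesis using True by simp
    next
      case False
      hence "i*DSB < it*DSB" using pos by (simp add: mult_strict_right_mono)
      hence "DOB - i*DSB > 0" using itD by simp
      hence "DOD - i*DSD < 0" unfolding gD using k0 by (simp add: mult_pos_pos)
      thus ?thesis using False by simp
    qed
    have V2: "Vrec M qH q1 q2 qL R = pB * (DOB * F it - DSB * (\<integral>i\<in>{..it}. i \<partial>M))
       + (1-pB) * (DOD * (1 - F it) - DSD * (\<integral>i\<in>{it..}. i \<partial>M))"
      unfolding V pw1 pw2 by (simp add: split_int[OF distr intI] measF measG)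
    show "Vrec M qH q1 q2 qL R = pB * F it * (DOB - DSB * Ei_le M it)
            + (1 - pB) * (1 - F it) * (DOD - DSD * Ei_ge M it)"
      unfolding V2 Ei_le_def Ei_ge_def measF measG using F0 F1 by (simp add: field_simps)
  qed
qed

end
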